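(* Consider the networked system $\Sigma$ with $u\equiv 0$, i.e. $\dot x=(I_{\bar n}\otimes A-L\otimes BC)x$, $x=(x_1,\dots,x_{\bar n})$, $x_i\in\mathbb{R}^n$, and suppose Assumption A holds. Then every solution satisfies $\lim_{t\to\infty}(x_i(t)-x_j(t))=0$ for all $i,j\in\{1,\dots,\bar n\}$.
   Context: Subsystem data: $Q=Q^\top\succ0$, $J=-J^\top$, $R=R^\top\succeq0$ in $\mathbb{R}^{n\times n}$, $B\in\mathbb{R}^{n\times m}$, $A=(J-R)Q$, $C=B^\top Q$, and $(A,B,C)$ is a minimal realization ($(A,B)$ controllable, $(C,A)$ observable). Weights $w_{ij}\ge0$ ($i\neq j\in\{1,\dots,\bar n\}$, $\bar n\ge2$); $L_{ij}=-w_{ij}$ for $i\ne j$, $L_{ii}=\sum_{j\ne i}w_{ij}$. The networked system is $\Sigma$: $\dot x=(I\otimes A-L\otimes BC)x+(G\otimes B)u$, $y=(H\otimes C)x$ with $G\in\mathbb{R}^{\bar n\times\bar m}$, $H\in\mathbb{R}^{\bar p\times\bar n}$; $\otimes$ is the Kronecker product. The directed graph $\mathcal G$ on $\{1,\dots,\bar n\}$ has an arc $(i,j)$ iff $w_{ji}>0$; the underlying undirected graph $\mathcal G_u$ has an edge between $i$ and $j$ iff $w_{ij}+w_{ji}>0$. A directed rooted spanning tree is a subgraph of $\mathcal G$ that is a directed tree containing all vertices in which every vertex except one root has exactly one incoming arc. Assumption A: (i) $\mathcal G_u$ is a tree; (ii) $\mathcal G$ contains a directed rooted spanning tree as a subgraph.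 *)

theory Defs
  imports "HOL-Analysis.Analysis"
begin

fun mpow :: "real^'n^'n \<Rightarrow> nat \<Rightarrow> real^'n^'n" where
  "mpow A 0 = mat 1"
| "mpow A (Suc k) = A ** mpow A k"

definition symmetric_mat :: "real^'n^'n \<Rightarrow> bool" where
  "symmetric_mat M \<longleftrightarrow> transpose M = M"

definition pos_def :: "real^'n^'n \<Rightarrow> bool" where
  "pos_def M \<longleftrightarrow> symmetric_mat M \<and> (\<forall>v. v \<noteq> 0 \<longrightarrow> v \<bullet> (M *v v) > 0)"

definition pos_semidef :: "real^'n^'n \<Rightarrow> bool" where
  "pos_semidef M \<longleftrightarrow> symmetric_mat M \<and> (\<forall>v. v \<bullet> (M *v v) \<ge> 0)"

definition skew_symmetric :: "real^'n^'n \<Rightarrow> bool" where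
  "skew_symmetric M \<longleftrightarrow> transpose M = - M"

definition controllable :: "real^'n^'n \<Rightarrow> real^'m^'n \<Rightarrow> bool" where
  "controllable A B \<longleftrightarrow>
     span {(mpow A k ** B) *v e | k e. k < CARD('n) \<and> e \<in> (UNIV :: (real^'m) set)} = UNIV"

definition observable :: "real^'n^'p \<Rightarrow> real^'n^'n \<Rightarrow> bool" where
  "observable C A \<longleftrightarrow> (\<forall>v. (\<forall>k < CARD('n). (C ** mpow A k) *v v = 0) \<longrightarrow> v = 0)"

definition uadj :: "('k \<Rightarrow> 'k \<Rightarrow> bool) \<Rightarrow> 'k \<Rightarrow> 'k \<Rightarrow> bool" where
  "uadj E a b \<longleftrightarrow> a \<noteq> b \<and> (E a b \<or> E b a)"

definition graph_connected :: "('k \<Rightarrow> 'k \<Rightarrow> bool) \<Rightarrow> bool" where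
  "graph_connected E \<longleftrightarrow> (\<forall>u v. (uadj E)\<^sup>*\<^sup>* u v)"

definition has_cycle :: "('k \<Rightarrow> 'k \<Rightarrow> bool) \<Rightarrow> bool" where
  "has_cycle E \<longleftrightarrow> (\<exists>vs. length vs \<ge> 3 \<and> distinct vs \<and>
       (\<forall>i < length vs - 1. uadj E (vs ! i) (vs ! Suc i)) \<and> uadj E (last vs) (hd vs))"

definition is_tree :: "('k \<Rightarrow> 'k \<Rightarrow> bool) \<Rightarrow> bool" where
  "is_tree E \<longleftrightarrow> graph_connected E \<and> \<not> has_cycle E"

definition arc :: "('k \<Rightarrow> 'k \<Rightarrow> real) \<Rightarrow> 'k \<Rightarrow> 'k \<Rightarrow> bool" where
  "arc w i j \<longleftrightarrow> i \<noteq> j \<and> w j i > 0"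

definition uedge :: "('k \<Rightarrow> 'k \<Rightarrow> real) \<Rightarrow> 'k \<Rightarrow> 'k \<Rightarrow> bool" where
  "uedge w i j \<longleftrightarrow> i \<noteq> j \<and> w i j + w j i > 0"

definition has_rooted_spanning_tree :: "('k \<Rightarrow> 'k \<Rightarrow> real) \<Rightarrow> bool" where
  "has_rooted_spanning_tree w \<longleftrightarrow> (\<exists>T r.
      (\<forall>i j. T i j \<longrightarrow> arc w i j) \<and> is_tree T \<and>
      (\<forall>i. \<not> T i r) \<and> (\<forall>v. v \<noteq> r \<longrightarrow> (\<exists>!i. T i v)))"

definition laplacian :: "('k::finite \<Rightarrow> 'k \<Rightarrow> real) \<Rightarrow> 'k \<Rightarrow> 'k \<Rightarrow> real" where
  "laplacian w i j = (if i = j then (\<Sum>l \<in> UNIV - {i}. w i l) else - w i j)"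

text \<open>Kronecker product of a k\<times>k matrix M and an n\<times>n matrix N acting on the stacked
  vector x = (x_1,...,x_nbar), written blockwise: ((M \<otimes> N) x)_i = \<Sum>_j M i j * N x_j.\<close>
definition kron_apply :: "('k::finite \<Rightarrow> 'k \<Rightarrow> real) \<Rightarrow> real^'n^'n \<Rightarrow> real^'n^'k \<Rightarrow> real^'n^'k" where
  "kron_apply M N x = (\<chi> i. \<Sum>j\<in>UNIV. M i j *\<^sub>R (N *v (x $ j)))"

definition network_rhs :: "('k::finite \<Rightarrow> 'k \<Rightarrow> real) \<Rightarrow> real^'n^'n \<Rightarrow> real^'n^'n \<Rightarrow> real^'n^'k \<Rightarrow> real^'n^'k" where
  "network_rhs L A BC x =
     kron_apply (\<lambda>i j. if i = j then 1 else 0) A x - kron_apply L BC x"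

end

theory Submission
  imports Defs
begin



locale tnet =
  fixes w :: "'k::finite \<Rightarrow> 'k \<Rightarrow> real" and T :: "'k \<Rightarrow> 'k \<Rightarrow> bool" and r :: 'k
  assumes nonneg: "\<forall>i j. i \<noteq> j \<longrightarrow> w i j \<ge> 0"
    and utree: "is_tree (uedge w)"
    and Tarc: "\<forall>i j. T i j \<longrightarrow> arc w i j"
    and Ttree: "is_tree T"
    and Troot: "\<forall>i. \<not> T i r"
    and Tuniq: "\<forall>v. v \<noteq> r \<longrightarrow> (\<exists>!i. T i v)"
begin

definition par :: "'k \<Rightarrow> 'k" where "par v = (THE i. T i v)"

lemma par_T: "v \<noteq> r \<Longrightarrow> T (par v) v"
  unfolding par_def using Tuniq by (metis theI')

lemma par_unique: "T i v \<Longrightarrow> par v = i"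
  unfolding par_def using Tuniq Troot by (metis the1_equality)

lemma par_ne: "v \<noteq> r \<Longrightarrow> par v \<noteq> v"
  using par_T Tarc unfolding arc_def by blast

lemma a_pos: "v \<noteq> r \<Longrightarrow> w v (par v) > 0"
  using par_T Tarc unfolding arc_def by blast

lemma reach: "\<exists>n. (par ^^ n) v = r"
proof -
  have "(uadj T)\<^sup>*\<^sup>* r v" using Ttree unfolding is_tree_def graph_connected_def by blast
  then show ?thesis
  proof (induction rule: rtranclp_induct)
    case base
    then show ?case by (rule exI[of _ 0]) simp
  next
    case (step u x)
    then obtain n where n: "(par ^^ n) u = r" by blast
    from step(2) have "T u x \<or> T x u" unfolding uadj_def by blast
    then show ?case
    proof
      assume "T u x"
      then have "par x = u" by (rule par_unique)
      then have "(par ^^ Suc n) x = r" using n by (simp add: funpow_Suc_right del: funpow.simps)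
      then show ?thesis by blast
    next
      assume "T x u"
      then have pu: "par u = x" by (rule par_unique)
      have "u \<noteq> r" using \<open>T x u\<close> Troot by blast
      then obtain m where "n = Suc m" using n by (cases n) auto
      then have "(par ^^ m) (par u) = r" using n by (simp add: funpow_Suc_right del: funpow.simps)
      then show ?thesis using pu by blast
    qed
  qed
qed

definition depth :: "'k \<Rightarrow> nat" where "depth v = (LEAST n. (par ^^ n) v = r)"

lemma pow_depth: "(par ^^ depth v) v = r"
  unfolding depth_def using reach by (rule LeastI_ex)

lemma depth_root: "depth r = 0"
  unfolding depth_def by (rule Least_eq_0) simp

lemma depth_zero: "depth v = 0 \<Longrightarrow> v = r"
  using pow_depth[of v] by simp

lemma depth_par: "v \<noteq> r \<Longrightarrow> depth v = Suc (depth (par v))"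
proof -
  assume vr: "v \<noteq> r"
  obtain m where m: "depth v = Suc m" using vr depth_zero by (cases "depth v") auto
  have "(par ^^ m) (par v) = r" using pow_depth[of v] m by (simp add: funpow_Suc_right del: funpow.simps)
  then have le: "depth (par v) \<le> m" unfolding depth_def by (rule Least_le)
  have "(par ^^ Suc (depth (par v))) v = r" using pow_depth[of "par v"] by (simp add: funpow_Suc_right del: funpow.simps)
  then have "depth v \<le> Suc (depth (par v))" unfolding depth_def by (rule Least_le)
  then show ?thesis using le m by simp
qed

lemma depth_pow: "m \<le> depth v \<Longrightarrow> depth ((par ^^ m) v) = depth v - m"
proof (induction m)
  case 0 then show ?case by simp
next
  case (Suc m)
  have ne: "(par ^^ m) v \<noteq> r"
  proof
    assume "(par ^^ m) v = r"
    then have "depth v \<le> m" unfolding depth_def by (rule Least_le)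
    then show False using Suc.prems by simp
  qed
  have "depth ((par ^^ Suc m) v) = depth (par ((par ^^ m) v))" by simp
  also have "\<dots> = depth ((par ^^ m) v) - 1" using depth_par[OF ne] by simp
  finally show ?case using Suc by simp
qed

lemma pow_ne_root: "m < depth v \<Longrightarrow> (par ^^ m) v \<noteq> r"
  using depth_pow[of m v] depth_root by auto

lemma T_uedge: "T a b \<Longrightarrow> uedge w a b \<and> uedge w b a"
proof -
  assume "T a b"
  then have "a \<noteq> b" "w b a > 0" using Tarc unfolding arc_def by auto
  moreover have "w a b \<ge> 0" using nonneg \<open>a \<noteq> b\<close> by auto
  ultimately show ?thesis unfolding uedge_def by auto
qed

lemma par_uadj: "u \<noteq> r \<Longrightarrow> uadj (uedge w) u (par u) \<and> uadj (uedge w) (par u) u"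
proof -
  assume u: "u \<noteq> r"
  have "par u \<noteq> u" using par_ne[OF u] .
  then show ?thesis using T_uedge[OF par_T[OF u]] unfolding uadj_def by auto
qed

lemma edge_par:
  assumes ij: "i \<noteq> j" and wij: "w i j > 0"
  shows "(i \<noteq> r \<and> j = par i) \<or> (j \<noteq> r \<and> i = par j)"
proof (rule ccontr)
  assume bad: "\<not> ?thesis"
  define P where "P k \<longleftrightarrow> (\<exists>k'. k' \<le> depth j \<and> (par ^^ k) i = (par ^^ k') j)" for k
  have Pex: "P (depth i)" unfolding P_def using pow_depth[of i] pow_depth[of j] by auto
  define ki where "ki = (LEAST k. P k)"
  have Pki: "P ki" unfolding ki_def using Pex by (rule LeastI)
  have kile: "ki \<le> depth i" unfolding ki_def using Pex by (rule Least_le)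
  obtain kj where kjle: "kj \<le> depth j" and meet: "(par ^^ ki) i = (par ^^ kj) j"
    using Pki unfolding P_def by blast
  have notP: "m < ki \<Longrightarrow> (par ^^ m) i \<noteq> (par ^^ m') j" if "m' \<le> depth j" for m m'
    using not_less_Least[of m P] that unfolding ki_def P_def by blast
  define f where "f m = (if m < ki then (par ^^ m) i else (par ^^ (ki + kj - m)) j)" for m
  define K where "K = ki + kj + 1"
  define vs where "vs = map f [0..<K]"
  have lenvs: "length vs = K" unfolding vs_def by simp
  have K3: "K \<ge> 3"
  proof (rule ccontr)
    assume "\<not> K \<ge> 3"
    then have "ki + kj \<le> 1" unfolding K_def by simp
    then consider "ki = 0 \<and> kj = 0" | "ki = 1 \<and> kj = 0" | "ki = 0 \<and> kj = 1" by linarith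
    then show False
    proof cases
      case 1 then show False using meet ij by simp
    next
      case 2
      then have "par i = j" using meet by simp
      moreover have "i \<noteq> r" using 2 kile depth_root by auto
      ultimately show False using bad by blast
    next
      case 3
      then have "par j = i" using meet by simp
      moreover have "j \<noteq> r" using 3 kjle depth_root by auto
      ultimately show False using bad by blast
    qed
  qed
  have inj: "inj_on f {0..<K}"
  proof (rule inj_onI)
    fix m1 m2 assume m1: "m1 \<in> {0..<K}" and m2: "m2 \<in> {0..<K}" and eq: "f m1 = f m2"
    show "m1 = m2"
    proof (cases "m1 < ki"; cases "m2 < ki")
      assume a: "m1 < ki" "m2 < ki"
      then have "depth ((par ^^ m1) i) = depth ((par ^^ m2) i)" using eq unfolding f_def by simp
      then show ?thesis using a kile depth_pow[of m1 i] depth_pow[of m2 i] by simp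
    next
      assume a: "m1 < ki" "\<not> m2 < ki"
      have "(par ^^ m1) i = (par ^^ (ki + kj - m2)) j" using eq a unfolding f_def by simp
      moreover have "ki + kj - m2 \<le> depth j" using kjle a by simp
      ultimately show ?thesis using notP[OF _ a(1)] by blast
    next
      assume a: "\<not> m1 < ki" "m2 < ki"
      have "(par ^^ m2) i = (par ^^ (ki + kj - m1)) j" using eq a unfolding f_def by simp
      moreover have "ki + kj - m1 \<le> depth j" using kjle a by simp
      ultimately show ?thesis using notP[OF _ a(2)] by blast
    next
      assume a: "\<not> m1 < ki" "\<not> m2 < ki"
      then have "depth ((par ^^ (ki + kj - m1)) j) = depth ((par ^^ (ki + kj - m2)) j)"
        using eq unfolding f_def by simp
      moreover have "ki + kj - m1 \<le> depth j" "ki + kj - m2 \<le> depth j" using kjle a by auto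
      ultimately have "ki + kj - m1 = ki + kj - m2" using depth_pow by simp
      then show ?thesis using a m1 m2 unfolding K_def by auto
    qed
  qed
  have dist: "distinct vs" unfolding vs_def using inj by (simp add: distinct_map)
  have step: "uadj (uedge w) (f m) (f (Suc m))" if "m < K - 1" for m
  proof (cases "Suc m < ki")
    case True
    have "f (Suc m) = par (f m)" using True unfolding f_def by simp
    moreover have "f m \<noteq> r" using True kile pow_ne_root unfolding f_def by simp
    ultimately show ?thesis using par_uadj by metis
  next
    case False
    show ?thesis
    proof (cases "Suc m = ki")
      case True
      have "f (Suc m) = (par ^^ kj) j" using True unfolding f_def by simp
      also have "\<dots> = par ((par ^^ m) i)" using meet True[symmetric] by simp
      finally have "f (Suc m) = par (f m)" using True unfolding f_def by simp
      moreover have "f m \<noteq> r" using True kile pow_ne_root unfolding f_def by simp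
      ultimately show ?thesis using par_uadj by metis
    next
      case False2: False
      define s where "s = ki + kj - Suc m"
      have ms: "ki + kj - m = Suc s" using that False False2 unfolding s_def K_def by simp
      have "f m = (par ^^ Suc s) j" using False False2 ms unfolding f_def by simp
      moreover have "f (Suc m) = (par ^^ s) j" using False False2 unfolding f_def s_def by simp
      ultimately have "f m = par (f (Suc m))" by simp
      moreover have "s < depth j" using kjle that False False2 unfolding K_def s_def by linarith
      then have "f (Suc m) \<noteq> r" using pow_ne_root \<open>f (Suc m) = (par ^^ s) j\<close> by simp
      ultimately show ?thesis using par_uadj by metis
    qed
  qed
  have "\<forall>m < length vs - 1. uadj (uedge w) (vs ! m) (vs ! Suc m)"
    using step unfolding vs_def K_def by (auto simp del: upt_Suc)
  moreover have "last vs = j"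
  proof -
    have "last vs = f (K - 1)" unfolding vs_def K_def by (simp add: last_map del: upt_Suc)
    then show ?thesis unfolding f_def K_def by simp
  qed
  moreover have "hd vs = i"
  proof -
    have "hd vs = f 0" unfolding vs_def K_def by (simp add: hd_map del: upt_Suc)
    then show ?thesis unfolding f_def using meet by auto
  qed
  moreover have "uadj (uedge w) j i"
    using ij wij nonneg unfolding uadj_def uedge_def by (metis add_pos_nonneg)
  ultimately have "has_cycle (uedge w)" unfolding has_cycle_def using K3 dist lenvs by metis
  then show False using utree unfolding is_tree_def by blast
qed

end



lemma quad_lower:
  fixes q :: "'a::euclidean_space \<Rightarrow> real"
  assumes cont: "continuous_on UNIV q"
    and hom: "\<And>x s. q (s *\<^sub>R x) = s\<^sup>2 * q x"
    and pos: "\<And>x. x \<noteq> 0 \<Longrightarrow> q x > 0"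
  shows "\<exists>\<mu>>0. \<forall>x. \<mu> * (norm x)\<^sup>2 \<le> q x"
proof -
  obtain e :: 'a where e: "e \<in> Basis" using nonempty_Basis by blast
  have ne: "sphere (0::'a) 1 \<noteq> {}" using e by (auto simp: sphere_def intro!: exI[of _ e])
  obtain x0 where x0: "x0 \<in> sphere 0 1" and min: "\<forall>y\<in>sphere 0 1. q x0 \<le> q y"
    using continuous_attains_inf[OF compact_sphere ne continuous_on_subset[OF cont]] by blast
  have x0ne: "x0 \<noteq> 0" using x0 by auto
  have mu: "q x0 > 0" using pos[OF x0ne] .
  have "q x0 * (norm x)\<^sup>2 \<le> q x" for x
  proof (cases "x = 0")
    case True
    have "q x = 0" using hom[of 0 x] True by simp
    then show ?thesis using True by simp
  next
    case False
    define u where "u = (1 / norm x) *\<^sub>R x"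
    have u: "u \<in> sphere 0 1" using False unfolding u_def by (simp add: sphere_def)
    have "x = norm x *\<^sub>R u" using False unfolding u_def by simp
    then have "q x = (norm x)\<^sup>2 * q u" using hom by metis
    moreover have "q x0 \<le> q u" using min u by blast
    ultimately show ?thesis by (metis mult.commute mult_right_mono zero_le_power2)
  qed
  then show ?thesis using mu by blast
qed

context tnet begin

definition a :: "'k \<Rightarrow> real" where "a v = w v (par v)"
definition b :: "'k \<Rightarrow> real" where "b v = w (par v) v"

lemma a_pos': "v \<noteq> r \<Longrightarrow> a v > 0" unfolding a_def using a_pos by simp
lemma b_nonneg: "v \<noteq> r \<Longrightarrow> b v \<ge> 0" unfolding b_def using nonneg par_ne by metis

lemma depth_induct:
  assumes "P r" "\<And>v. v \<noteq> r \<Longrightarrow> P (par v) \<Longrightarrow> P v"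
  shows "P v"
proof (induction "depth v" arbitrary: v rule: less_induct)
  case less
  show ?case
  proof (cases "v = r")
    case True then show ?thesis using assms by simp
  next
    case False
    then have "depth (par v) < depth v" using depth_par by simp
    then show ?thesis using less assms(2)[OF False] by blast
  qed
qed

primrec gwr :: "('k \<Rightarrow> real) \<Rightarrow> nat \<Rightarrow> 'k \<Rightarrow> real" where
  "gwr d 0 v = 1"
| "gwr d (Suc n) v = (gwr d n (par v) * b v + d v) / a v"

definition gw :: "('k \<Rightarrow> real) \<Rightarrow> 'k \<Rightarrow> real" where "gw d v = gwr d (depth v) v"

lemma gw_root: "gw d r = 1" unfolding gw_def depth_root by simp

lemma gw_eq: "v \<noteq> r \<Longrightarrow> gw d v = (gw d (par v) * b v + d v) / a v"
  unfolding gw_def using depth_par by simp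

lemma gw_rec: "v \<noteq> r \<Longrightarrow> gw d v * a v = gw d (par v) * b v + d v"
  using gw_eq[of v d] a_pos'[of v] by simp

lemma gw_nonneg: "(\<And>v. d v \<ge> 0) \<Longrightarrow> gw d v \<ge> 0"
proof (induction v rule: depth_induct)
  case 1 then show ?case by (simp add: gw_root)
next
  case (2 v) then show ?case using gw_eq[OF 2(1)] a_pos'[OF 2(1)] b_nonneg[OF 2(1)] by simp
qed

lemma gw_pos: "(\<And>v. d v > 0) \<Longrightarrow> gw d v > 0"
proof (induction v rule: depth_induct)
  case 1 then show ?case by (simp add: gw_root)
next
  case (2 v)
  have "gw d (par v) * b v + d v > 0" using 2 b_nonneg[OF 2(1)] by (simp add: add_nonneg_pos)
  then show ?case using gw_eq[OF 2(1)] a_pos'[OF 2(1)] by simp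
qed

lemma gw_mono: "(\<And>v. 0 \<le> d1 v) \<Longrightarrow> (\<And>v. d1 v \<le> d2 v) \<Longrightarrow> gw d1 v \<le> gw d2 v"
proof (induction v rule: depth_induct)
  case 1 then show ?case by (simp add: gw_root)
next
  case (2 v)
  have "gw d1 (par v) * b v + d1 v \<le> gw d2 (par v) * b v + d2 v"
    using 2 b_nonneg[OF 2(1)] by (simp add: add_mono mult_right_mono)
  then show ?case using gw_eq[OF 2(1), of d1] gw_eq[OF 2(1), of d2] a_pos'[OF 2(1)]
    by (simp add: divide_right_mono)
qed

lemma sum_minus_single:
  fixes h :: "'k \<Rightarrow> 'a::ab_group_add"
  shows "sum h (UNIV - {i}) = (\<Sum>j\<in>UNIV. if j = i then 0 else h j)"
  by (rule sum.mono_neutral_cong_left) auto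

lemma edge_sum:
  fixes F :: "'k \<Rightarrow> 'k \<Rightarrow> 'a::real_vector"
  shows "(\<Sum>i\<in>UNIV. \<Sum>j\<in>UNIV - {i}. w i j *\<^sub>R F i j)
       = (\<Sum>c\<in>UNIV - {r}. w c (par c) *\<^sub>R F c (par c) + w (par c) c *\<^sub>R F (par c) c)"
proof -
  have pt: "(if j = i then 0 else w i j *\<^sub>R F i j)
     = (if i \<noteq> r \<and> j = par i then w i j *\<^sub>R F i j else 0)
       + (if j \<noteq> r \<and> i = par j then w i j *\<^sub>R F i j else 0)" for i j
  proof (cases "j = i")
    case True
    have h: "i \<noteq> r \<Longrightarrow> i \<noteq> par i" using par_ne by metis
    show ?thesis using True h by (cases "i = r") simp_all
  next
    case False
    show ?thesis
    proof (cases "w i j = 0")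
      case True
      then have h0: "w i j *\<^sub>R F i j = 0" by simp
      show ?thesis unfolding h0 by simp
    next
      case wne: False
      then have "w i j > 0" using nonneg False by (metis order_le_less)
      then have alt: "(i \<noteq> r \<and> j = par i) \<or> (j \<noteq> r \<and> i = par j)" using edge_par False by metis
      have notboth: "\<not> ((i \<noteq> r \<and> j = par i) \<and> (j \<noteq> r \<and> i = par j))"
      proof
        assume h: "(i \<noteq> r \<and> j = par i) \<and> (j \<noteq> r \<and> i = par j)"
        have "depth i = Suc (depth (par i))" using h depth_par by blast
        moreover have "depth j = Suc (depth (par j))" using h depth_par by blast
        moreover have "par i = j" "par j = i" using h by (metis, metis)
        ultimately have "depth i = Suc (depth j)" "depth j = Suc (depth i)" by metis+
        then show False by simp
      qed
      show ?thesis
      proof (cases "i \<noteq> r \<and> j = par i")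
        case True
        then have n2: "\<not> (j \<noteq> r \<and> i = par j)" using notboth by blast
        show ?thesis by (simp only: if_not_P[OF False] if_P[OF True] if_not_P[OF n2] add_0_right)
      next
        case n1: False
        then have c2: "j \<noteq> r \<and> i = par j" using alt by blast
        show ?thesis by (simp only: if_not_P[OF False] if_P[OF c2] if_not_P[OF n1] add_0_left)
      qed
    qed
  qed
  define X where "X i j = (if i \<noteq> r \<and> j = par i then w i j *\<^sub>R F i j else 0)" for i j
  define Y where "Y i j = (if j \<noteq> r \<and> i = par j then w i j *\<^sub>R F i j else 0)" for i j
  have "(\<Sum>i\<in>UNIV. \<Sum>j\<in>UNIV - {i}. w i j *\<^sub>R F i j)
      = (\<Sum>i\<in>UNIV. \<Sum>j\<in>UNIV. X i j + Y i j)"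
    unfolding X_def Y_def by (simp only: sum_minus_single pt)
  also have "\<dots> = (\<Sum>i\<in>UNIV. \<Sum>j\<in>UNIV. X i j) + (\<Sum>i\<in>UNIV. \<Sum>j\<in>UNIV. Y i j)"
    by (simp only: sum.distrib)
  also have "(\<Sum>i\<in>UNIV. \<Sum>j\<in>UNIV. Y i j) = (\<Sum>j\<in>UNIV. \<Sum>i\<in>UNIV. Y i j)"
    by (rule sum.swap)
  also have "(\<Sum>i\<in>UNIV. \<Sum>j\<in>UNIV. X i j)
      = (\<Sum>i\<in>UNIV. if i \<noteq> r then w i (par i) *\<^sub>R F i (par i) else 0)"
    unfolding X_def by (rule sum.cong) (auto simp: sum.delta' cong: if_cong)
  also have "(\<Sum>j\<in>UNIV. \<Sum>i\<in>UNIV. Y i j)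
      = (\<Sum>j\<in>UNIV. if j \<noteq> r then w (par j) j *\<^sub>R F (par j) j else 0)"
    unfolding Y_def by (rule sum.cong) (auto simp: sum.delta' cong: if_cong)
  finally show ?thesis
    by (simp add: sum.If_cases sum.distrib Diff_eq Compl_eq)
qed

end



context tnet begin

definition lapv :: "('k \<Rightarrow> 'a::real_vector) \<Rightarrow> 'k \<Rightarrow> 'a" where
  "lapv u i = (\<Sum>j\<in>UNIV. laplacian w i j *\<^sub>R u j)"

lemma lapv_eq: "lapv u i = (\<Sum>j\<in>UNIV - {i}. w i j *\<^sub>R (u i - u j))"
proof -
  have "lapv u i = laplacian w i i *\<^sub>R u i + (\<Sum>j\<in>UNIV - {i}. laplacian w i j *\<^sub>R u j)"
    unfolding lapv_def by (simp add: sum.remove[of UNIV i])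
  also have "\<dots> = (\<Sum>j\<in>UNIV - {i}. w i j) *\<^sub>R u i + (\<Sum>j\<in>UNIV - {i}. - (w i j *\<^sub>R u j))"
    unfolding laplacian_def by (intro arg_cong2[where f="(+)"] sum.cong) auto
  also have "\<dots> = (\<Sum>j\<in>UNIV - {i}. w i j *\<^sub>R (u i - u j))"
    by (simp add: scaleR_sum_left sum_subtractf[symmetric] scaleR_diff_right sum_negf)
  finally show ?thesis .
qed

abbreviation pi :: "'k \<Rightarrow> real" where "pi \<equiv> gw (\<lambda>_. 0)"

lemma pi_nonneg: "pi v \<ge> 0" by (rule gw_nonneg) simp

lemma pi_root: "pi r = 1" by (rule gw_root)

lemma pi_rec: "c \<noteq> r \<Longrightarrow> pi c * a c = pi (par c) * b c"
  using gw_rec[of c "\<lambda>_. 0"] by simp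

lemma pi_pos_iff: "c \<noteq> r \<Longrightarrow> pi c > 0 \<longleftrightarrow> pi (par c) * b c > 0"
  using pi_rec[of c] a_pos'[of c] by (metis mult_pos_pos pi_nonneg zero_less_mult_pos2)

lemma pi_lap: "(\<Sum>i\<in>UNIV. pi i *\<^sub>R lapv u i) = 0"
proof -
  have "(\<Sum>i\<in>UNIV. pi i *\<^sub>R lapv u i) = (\<Sum>i\<in>UNIV. \<Sum>j\<in>UNIV - {i}. w i j *\<^sub>R (pi i *\<^sub>R (u i - u j)))"
    unfolding lapv_eq by (simp add: scaleR_sum_right mult.commute)
  also have "\<dots> = (\<Sum>c\<in>UNIV - {r}. w c (par c) *\<^sub>R (pi c *\<^sub>R (u c - u (par c)))
                     + w (par c) c *\<^sub>R (pi (par c) *\<^sub>R (u (par c) - u c)))"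
    by (rule edge_sum)
  also have "\<dots> = (\<Sum>c\<in>UNIV - {r}. (pi c * a c - pi (par c) * b c) *\<^sub>R (u c - u (par c)))"
    unfolding a_def b_def by (rule sum.cong) (auto simp: algebra_simps)
  also have "\<dots> = 0" using pi_rec by simp
  finally show ?thesis .
qed

lemma phi_eq:
  fixes u :: "'k \<Rightarrow> 'a::real_inner"
  shows "(\<Sum>i\<in>UNIV. gw d i * (u i \<bullet> lapv u i))
    = (\<Sum>c\<in>UNIV - {r}. gw d (par c) * b c * (norm (u c - u (par c)))\<^sup>2 + d c * (u c \<bullet> (u c - u (par c))))"
proof -
  have "(\<Sum>i\<in>UNIV. gw d i * (u i \<bullet> lapv u i))
      = (\<Sum>i\<in>UNIV. \<Sum>j\<in>UNIV - {i}. w i j *\<^sub>R (gw d i * (u i \<bullet> (u i - u j))))"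
    unfolding lapv_eq by (simp add: inner_sum_right sum_distrib_left algebra_simps)
  also have "\<dots> = (\<Sum>c\<in>UNIV - {r}. w c (par c) *\<^sub>R (gw d c * (u c \<bullet> (u c - u (par c))))
                     + w (par c) c *\<^sub>R (gw d (par c) * (u (par c) \<bullet> (u (par c) - u c))))"
    by (rule edge_sum)
  also have "\<dots> = (\<Sum>c\<in>UNIV - {r}. gw d (par c) * b c * (norm (u c - u (par c)))\<^sup>2 + d c * (u c \<bullet> (u c - u (par c))))"
  proof (rule sum.cong)
    fix c assume "c \<in> UNIV - {r}"
    then have c: "c \<noteq> r" by simp
    have e: "gw d c * a c = gw d (par c) * b c + d c" using gw_rec[OF c] .
    have n: "(norm (u c - u (par c)))\<^sup>2 = (u c - u (par c)) \<bullet> (u c - u (par c))"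
      by (simp add: power2_norm_eq_inner)
    have "w c (par c) *\<^sub>R (gw d c * (u c \<bullet> (u c - u (par c))))
        = (gw d (par c) * b c + d c) * (u c \<bullet> (u c - u (par c)))"
    proof -
      have e': "w c (par c) * gw d c = gw d (par c) * b c + d c" using e unfolding a_def by (simp add: mult.commute)
      have "w c (par c) *\<^sub>R (gw d c * (u c \<bullet> (u c - u (par c))))
          = (w c (par c) * gw d c) * (u c \<bullet> (u c - u (par c)))" by simp
      then show ?thesis unfolding e' .
    qed
    then show "w c (par c) *\<^sub>R (gw d c * (u c \<bullet> (u c - u (par c))))
                     + w (par c) c *\<^sub>R (gw d (par c) * (u (par c) \<bullet> (u (par c) - u c)))
          = gw d (par c) * b c * (norm (u c - u (par c)))\<^sup>2 + d c * (u c \<bullet> (u c - u (par c)))"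
      unfolding n b_def by (simp add: algebra_simps inner_diff_left inner_diff_right inner_commute)
  qed simp
  finally show ?thesis .
qed

end



context tnet begin

definition qR :: "('a::euclidean_space)^'k \<Rightarrow> real" where
  "qR y = (\<Sum>c\<in>UNIV - {r}. pi (par c) * b c * (norm (y$c - y$(par c)))\<^sup>2)
        + (norm (\<Sum>i\<in>UNIV. pi i *\<^sub>R y$i))\<^sup>2
        + (\<Sum>i\<in>UNIV. (if pi i = 0 then 1 else 0) * (norm (y$i))\<^sup>2)"

lemma pb_nonneg: "c \<noteq> r \<Longrightarrow> pi (par c) * b c \<ge> 0"
  using pi_nonneg b_nonneg by simp

lemma qR_parts_nonneg:
  "(\<Sum>c\<in>UNIV - {r}. pi (par c) * b c * (norm (y$c - y$(par c)))\<^sup>2) \<ge> 0"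
  "(\<Sum>i\<in>UNIV. (if pi i = 0 then 1 else 0) * (norm (y$i))\<^sup>2) \<ge> 0"
  by (intro sum_nonneg; auto intro: mult_nonneg_nonneg pb_nonneg)+

lemma qR_pos:
  fixes y :: "('a::euclidean_space)^'k"
  assumes "y \<noteq> 0" shows "qR y > 0"
proof (rule ccontr)
  assume "\<not> qR y > 0"
  then have z: "qR y = 0" using qR_parts_nonneg[of y] unfolding qR_def
    by (smt (verit) zero_le_power2)
  have p1: "(\<Sum>c\<in>UNIV - {r}. pi (par c) * b c * (norm (y$c - y$(par c)))\<^sup>2) = 0"
   and p2: "(norm (\<Sum>i\<in>UNIV. pi i *\<^sub>R y$i))\<^sup>2 = 0"
   and p3: "(\<Sum>i\<in>UNIV. (if pi i = 0 then 1 else 0) * (norm (y$i))\<^sup>2) = 0"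
    using z qR_parts_nonneg[of y] unfolding qR_def by (smt (verit) zero_le_power2)+
  have e1: "\<forall>c\<in>UNIV - {r}. pi (par c) * b c * (norm (y$c - y$(par c)))\<^sup>2 = 0"
    using p1 pb_nonneg by (subst (asm) sum_nonneg_eq_0_iff) auto
  have e3: "\<forall>i. (if pi i = 0 then 1 else 0) * (norm (y$i))\<^sup>2 = 0"
    using p3 by (subst (asm) sum_nonneg_eq_0_iff) auto
  have same: "pi v > 0 \<longrightarrow> y$v = y$r" for v
  proof (induction v rule: depth_induct)
    case 1 then show ?case by simp
  next
    case (2 v)
    show ?case
    proof
      assume pv: "pi v > 0"
      then have pb: "pi (par v) * b v > 0" using pi_pos_iff[OF 2(1)] by simp
      then have "pi (par v) > 0" using pi_nonneg[of "par v"] b_nonneg[OF 2(1)]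
        by (metis less_eq_real_def mult_zero_left)
      then have "y$(par v) = y$r" using 2 by simp
      moreover have "pi (par v) * b v * (norm (y$v - y$(par v)))\<^sup>2 = 0" using bspec[OF e1, of v] 2(1) by blast
      then have "(norm (y$v - y$(par v)))\<^sup>2 = 0" using pb by (metis mult_eq_0_iff less_irrefl)
      ultimately show "y$v = y$r" by simp
    qed
  qed
  have "(\<Sum>i\<in>UNIV. pi i *\<^sub>R y$i) = (\<Sum>i\<in>UNIV. pi i *\<^sub>R y$r)"
  proof (rule sum.cong)
    fix i
    show "pi i *\<^sub>R y$i = pi i *\<^sub>R y$r"
      using same[of i] pi_nonneg[of i] by (cases "pi i = 0") auto
  qed simp
  then have "(\<Sum>i\<in>UNIV. pi i) *\<^sub>R y$r = 0" using p2 by (simp add: scaleR_sum_left)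
  moreover have "(\<Sum>i\<in>UNIV. pi i) \<ge> pi r"
    by (rule member_le_sum) (auto simp: pi_nonneg)
  ultimately have yr: "y$r = 0" using pi_root by auto
  have "y$i = 0" for i
  proof (cases "pi i = 0")
    case True then show ?thesis using e3[rule_format, of i] by simp
  next
    case False
    then have "pi i > 0" using pi_nonneg[of i] by simp
    then show ?thesis using same yr by simp
  qed
  then have "y = 0" by (simp add: vec_eq_iff)
  then show False using assms by simp
qed

lemma qR_hom: "qR (s *\<^sub>R (y::('a::euclidean_space)^'k)) = s\<^sup>2 * qR y"
proof -
  have a1: "(norm ((s *\<^sub>R y)$c - (s *\<^sub>R y)$(par c)))\<^sup>2 = s\<^sup>2 * (norm (y$c - y$(par c)))\<^sup>2" for c
    by (simp add: scaleR_diff_right[symmetric] power_mult_distrib)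
  have a2: "(\<Sum>i\<in>UNIV. pi i *\<^sub>R (s *\<^sub>R y)$i) = s *\<^sub>R (\<Sum>i\<in>UNIV. pi i *\<^sub>R y$i)"
    by (simp add: scaleR_sum_right mult.commute)
  have a3: "(norm ((s *\<^sub>R y)$i))\<^sup>2 = s\<^sup>2 * (norm (y$i))\<^sup>2" for i
    by (simp add: power_mult_distrib)
  show ?thesis unfolding qR_def a1 a2 a3
    by (simp add: sum_distrib_left power_mult_distrib algebra_simps)
qed

lemma qR_cont: "continuous_on UNIV (qR :: ('a::euclidean_space)^'k \<Rightarrow> real)"
  unfolding qR_def by (intro continuous_intros)

lemma mu_exists:
  "\<exists>\<mu>>0. \<forall>y::('a::euclidean_space)^'k. (\<Sum>i\<in>UNIV. pi i *\<^sub>R y$i) = 0 \<longrightarrow>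
      \<mu> * (norm (y$r))\<^sup>2 \<le> (\<Sum>c\<in>UNIV - {r}. pi (par c) * b c * (norm (y$c - y$(par c)))\<^sup>2)"
proof -
  obtain \<mu> where mu: "\<mu> > 0" and le: "\<And>x::('a::euclidean_space)^'k. \<mu> * (norm x)\<^sup>2 \<le> qR x"
    using quad_lower[OF qR_cont qR_hom qR_pos] by blast
  have "\<mu> * (norm (y$r))\<^sup>2 \<le> (\<Sum>c\<in>UNIV - {r}. pi (par c) * b c * (norm (y$c - y$(par c)))\<^sup>2)"
    if hy: "(\<Sum>i\<in>UNIV. pi i *\<^sub>R y$i) = 0" for y :: "'a^'k"
  proof -
    define y' where "y' = (\<chi> v. if pi v > 0 then y$v else 0)"
    have s2: "(\<Sum>i\<in>UNIV. pi i *\<^sub>R y'$i) = (\<Sum>i\<in>UNIV. pi i *\<^sub>R y$i)"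
      unfolding y'_def using pi_nonneg by (intro sum.cong) (auto simp: order_le_less)
    have s3: "(\<Sum>i\<in>UNIV. (if pi i = 0 then 1 else 0) * (norm (y'$i))\<^sup>2) = 0"
      unfolding y'_def by (intro sum.neutral) auto
    have s1: "(\<Sum>c\<in>UNIV - {r}. pi (par c) * b c * (norm (y'$c - y'$(par c)))\<^sup>2)
            = (\<Sum>c\<in>UNIV - {r}. pi (par c) * b c * (norm (y$c - y$(par c)))\<^sup>2)"
    proof (rule sum.cong)
      fix c assume "c \<in> UNIV - {r}"
      then have c: "c \<noteq> r" by simp
      show "pi (par c) * b c * (norm (y'$c - y'$(par c)))\<^sup>2 = pi (par c) * b c * (norm (y$c - y$(par c)))\<^sup>2"
      proof (cases "pi (par c) * b c > 0")
        case True
        then have "pi c > 0" using pi_pos_iff[OF c] by simp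
        moreover have "pi (par c) > 0" using True pi_nonneg[of "par c"] b_nonneg[OF c]
          by (metis less_eq_real_def mult_zero_left)
        ultimately show ?thesis unfolding y'_def by simp
      next
        case False
        then have "pi (par c) * b c = 0" using pb_nonneg[OF c] by simp
        then show ?thesis by simp
      qed
    qed simp
    have "qR y' = (\<Sum>c\<in>UNIV - {r}. pi (par c) * b c * (norm (y$c - y$(par c)))\<^sup>2)"
      unfolding qR_def s1 s2 s3 hy by simp
    moreover have "y'$r = y$r" unfolding y'_def using pi_root by simp
    moreover have "norm (y'$r) \<le> norm y'" by (rule Finite_Cartesian_Product.norm_nth_le)
    then have "\<mu> * (norm (y'$r))\<^sup>2 \<le> \<mu> * (norm y')\<^sup>2"
      using mu by (simp add: power_mono)
    ultimately show ?thesis using le[of y'] by simp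
  qed
  then show ?thesis using mu by blast
qed

end



lemma aux_ineq: "(P::real) = X - 2*I + Q \<Longrightarrow> 0 \<le> Q \<Longrightarrow> (X - P)/2 \<le> I" by (simp add: field_simps)

context tnet begin

lemma phi_bound:
  "\<exists>d. (\<forall>v. d v > 0) \<and> (\<exists>c>0. \<forall>y::('a::euclidean_space)^'k. (\<Sum>i\<in>UNIV. pi i *\<^sub>R y$i) = 0 \<longrightarrow>
      c * (\<Sum>i\<in>UNIV. (norm (y$i))\<^sup>2) \<le> (\<Sum>i\<in>UNIV. gw d i * (y$i \<bullet> lapv (\<lambda>j. y$j) i)))"
proof -
  obtain \<mu> where mu: "\<mu> > 0" and mule: "\<And>y::'a^'k. (\<Sum>i\<in>UNIV. pi i *\<^sub>R y$i) = 0 \<Longrightarrow>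
      \<mu> * (norm (y$r))\<^sup>2 \<le> (\<Sum>c\<in>UNIV - {r}. pi (par c) * b c * (norm (y$c - y$(par c)))\<^sup>2)"
    using mu_exists by blast
  define N where "N = card (UNIV :: 'k set)"
  have N1: "N \<ge> 1" unfolding N_def by (simp add: Suc_leI)
  define \<theta> where "\<theta> = 1 / (2 * real N)"
  have th: "\<theta> > 0" "\<theta> * real N = 1/2" using N1 unfolding \<theta>_def by auto
  define d where "d v = \<mu> * \<theta> ^ depth v" for v
  have dpos: "d v > 0" for v unfolding d_def using mu th by simp
  have dpar: "c \<noteq> r \<Longrightarrow> d c = \<theta> * d (par c)" for c
    unfolding d_def using depth_par[of c] by simp
  have droot: "d r = \<mu>" unfolding d_def depth_root by simp
  define m where "m = Min (range d)"
  have mpos: "m > 0" unfolding m_def using dpos by (subst Min_gr_iff) auto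
  have mle: "m \<le> d v" for v unfolding m_def by (rule Min_le) auto
  have main: "m / 4 * (\<Sum>i\<in>UNIV. (norm (y$i))\<^sup>2) \<le> (\<Sum>i\<in>UNIV. gw d i * (y$i \<bullet> lapv (\<lambda>j. y$j) i))"
    if hy: "(\<Sum>i\<in>UNIV. pi i *\<^sub>R y$i) = 0" for y :: "'a^'k"
  proof -
    define u where "u i = y$i" for i
    define S where "S = (\<Sum>v\<in>UNIV. d v * (norm (u v))\<^sup>2)"
    have Phi: "(\<Sum>i\<in>UNIV. gw d i * (y$i \<bullet> lapv (\<lambda>j. y$j) i))
      = (\<Sum>c\<in>UNIV - {r}. gw d (par c) * b c * (norm (u c - u (par c)))\<^sup>2 + d c * (u c \<bullet> (u c - u (par c))))"
      using phi_eq[of d u] unfolding u_def by simp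
    have termwise: "gw d (par c) * b c * (norm (u c - u (par c)))\<^sup>2 + d c * (u c \<bullet> (u c - u (par c)))
        \<ge> pi (par c) * b c * (norm (u c - u (par c)))\<^sup>2 + d c / 2 * (norm (u c))\<^sup>2 - d c / 2 * (norm (u (par c)))\<^sup>2"
      if c: "c \<in> UNIV - {r}" for c
    proof -
      have cr: "c \<noteq> r" using c by simp
      have g: "pi (par c) \<le> gw d (par c)" by (rule gw_mono) (auto simp: less_imp_le[OF dpos])
      have "pi (par c) * b c * (norm (u c - u (par c)))\<^sup>2 \<le> gw d (par c) * b c * (norm (u c - u (par c)))\<^sup>2"
        using g b_nonneg[OF cr] by (intro mult_right_mono) auto
      moreover have "(norm (u (par c)))\<^sup>2 = (norm (u c))\<^sup>2 - 2 * (u c \<bullet> (u c - u (par c))) + (norm (u c - u (par c)))\<^sup>2"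
        by (simp add: power2_norm_eq_inner algebra_simps inner_diff_left inner_diff_right inner_commute)
      then have "u c \<bullet> (u c - u (par c)) \<ge> ((norm (u c))\<^sup>2 - (norm (u (par c)))\<^sup>2) / 2"
        using zero_le_power2[of "norm (u c - u (par c))"] aux_ineq by blast
      then have "d c * (u c \<bullet> (u c - u (par c))) \<ge> d c * (((norm (u c))\<^sup>2 - (norm (u (par c)))\<^sup>2) / 2)"
        using dpos[of c] by (intro mult_left_mono) auto
      moreover have "d c / 2 * (norm (u c))\<^sup>2 - d c / 2 * (norm (u (par c)))\<^sup>2
          = d c * (((norm (u c))\<^sup>2 - (norm (u (par c)))\<^sup>2) / 2)" by (simp add: field_simps)
      ultimately show ?thesis by linarith
    qed
    have s1: "(\<Sum>c\<in>UNIV - {r}. pi (par c) * b c * (norm (u c - u (par c)))\<^sup>2) \<ge> \<mu> * (norm (u r))\<^sup>2"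
      using mule[OF hy] unfolding u_def by simp
    have s2: "(\<Sum>c\<in>UNIV - {r}. d c * (norm (u c))\<^sup>2) = S - \<mu> * (norm (u r))\<^sup>2"
      unfolding S_def using droot by (simp add: sum.remove[of UNIV r])
    have s3: "(\<Sum>c\<in>UNIV - {r}. d c * (norm (u (par c)))\<^sup>2) \<le> S / 2"
    proof -
      have "(\<Sum>c\<in>UNIV - {r}. d c * (norm (u (par c)))\<^sup>2) = (\<Sum>c\<in>UNIV - {r}. \<theta> * (d (par c) * (norm (u (par c)))\<^sup>2))"
        using dpar by (intro sum.cong) auto
      also have "\<dots> \<le> (\<Sum>c\<in>UNIV - {r}. \<theta> * S)"
      proof (rule sum_mono)
        fix c
        have "d (par c) * (norm (u (par c)))\<^sup>2 \<le> S" unfolding S_def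
          by (rule member_le_sum) (auto intro: mult_nonneg_nonneg less_imp_le[OF dpos])
        then show "\<theta> * (d (par c) * (norm (u (par c)))\<^sup>2) \<le> \<theta> * S" using th by simp
      qed
      also have "\<dots> = real (card (UNIV - {r} :: 'k set)) * \<theta> * S" by simp
      also have "\<dots> \<le> real N * \<theta> * S"
      proof -
        have "card (UNIV - {r} :: 'k set) \<le> N" unfolding N_def by (rule card_mono) auto
        moreover have "S \<ge> 0" unfolding S_def by (auto intro!: sum_nonneg mult_nonneg_nonneg less_imp_le[OF dpos])
        ultimately show ?thesis using th by (intro mult_right_mono) auto
      qed
      also have "\<dots> = S / 2" using th by (simp add: mult.commute)
      finally show ?thesis .
    qed
    have "(\<Sum>i\<in>UNIV. gw d i * (y$i \<bullet> lapv (\<lambda>j. y$j) i))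
        \<ge> (\<Sum>c\<in>UNIV - {r}. pi (par c) * b c * (norm (u c - u (par c)))\<^sup>2 + d c / 2 * (norm (u c))\<^sup>2 - d c / 2 * (norm (u (par c)))\<^sup>2)"
      unfolding Phi by (rule sum_mono) (rule termwise)
    also have "(\<Sum>c\<in>UNIV - {r}. pi (par c) * b c * (norm (u c - u (par c)))\<^sup>2 + d c / 2 * (norm (u c))\<^sup>2 - d c / 2 * (norm (u (par c)))\<^sup>2)
      = (\<Sum>c\<in>UNIV - {r}. pi (par c) * b c * (norm (u c - u (par c)))\<^sup>2)
        + (\<Sum>c\<in>UNIV - {r}. d c * (norm (u c))\<^sup>2) / 2 - (\<Sum>c\<in>UNIV - {r}. d c * (norm (u (par c)))\<^sup>2) / 2"
      by (simp add: sum.distrib sum_subtractf sum_divide_distrib)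
    finally have fin: "(\<Sum>c\<in>UNIV - {r}. pi (par c) * b c * (norm (u c - u (par c)))\<^sup>2)
        + (\<Sum>c\<in>UNIV - {r}. d c * (norm (u c))\<^sup>2) / 2 - (\<Sum>c\<in>UNIV - {r}. d c * (norm (u (par c)))\<^sup>2) / 2
        \<le> (\<Sum>i\<in>UNIV. gw d i * (y$i \<bullet> lapv (\<lambda>j. y$j) i))" .
    have mr: "\<mu> * (norm (u r))\<^sup>2 \<ge> 0" using mu by simp
    have "(\<Sum>i\<in>UNIV. gw d i * (y$i \<bullet> lapv (\<lambda>j. y$j) i)) \<ge> S / 4"
      using fin s1 s2 s3 mr by linarith
    moreover have "m * (\<Sum>i\<in>UNIV. (norm (y$i))\<^sup>2) \<le> S"
      unfolding S_def u_def sum_distrib_left by (intro sum_mono mult_right_mono mle) auto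
    ultimately show ?thesis by simp
  qed
  show ?thesis using main dpos mpos by (intro exI[of _ d] conjI allI exI[of _ "m/4"] impI) auto
qed

end



lemma lipschitz_from_deriv:
  fixes z :: "real \<Rightarrow> 'a::real_inner"
  assumes der: "\<And>t. t \<ge> tz \<Longrightarrow> (z has_vector_derivative z' t) (at t)"
    and bnd: "\<And>t. t \<ge> tz \<Longrightarrow> norm (z' t) \<le> B"
    and s: "s \<ge> tz" and t: "t \<ge> tz"
  shows "norm (z s - z t) \<le> B * \<bar>s - t\<bar>"
proof -
  have key: "norm (z v - z u) \<le> B * (v - u)" if uv: "tz \<le> u" "u < v" for u v
  proof -
    have "isCont z x" if "x \<in> {u..v}" for x
      using has_vector_derivative_continuous[OF der[of x]] that uv by auto
    then have cont: "continuous_on {u..v} z" by (simp add: continuous_at_imp_continuous_on)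
    have "\<And>x. u < x \<Longrightarrow> x < v \<Longrightarrow> (z has_derivative (\<lambda>h. h *\<^sub>R z' x)) (at x)"
      using der uv unfolding has_vector_derivative_def by auto
    from mvt_general[OF uv(2) cont this] obtain x where x: "x \<in> {u<..<v}"
      and le: "norm (z v - z u) \<le> norm ((v - u) *\<^sub>R z' x)" by blast
    have "norm ((v - u) *\<^sub>R z' x) = (v - u) * norm (z' x)" using uv by simp
    also have "\<dots> \<le> (v - u) * B" using bnd[of x] x uv by (intro mult_left_mono) auto
    finally show ?thesis using le by (simp add: mult.commute)
  qed
  consider "s < t" | "s = t" | "t < s" by linarith
  then show ?thesis
  proof cases
    case 1 then show ?thesis using key[of s t] s by (simp add: norm_minus_commute)
  next
    case 2 then show ?thesis by simp
  next
    case 3 then show ?thesis using key[of t s] t by simp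
  qed
qed

lemma barbalat_ineq:
  fixes V V' h :: "real \<Rightarrow> real"
  assumes der: "\<And>t. t \<ge> tz \<Longrightarrow> (V has_real_derivative V' t) (at t)"
    and dle: "\<And>t. t \<ge> tz \<Longrightarrow> V' t \<le> - h t"
    and hnn: "\<And>t. t \<ge> tz \<Longrightarrow> h t \<ge> 0"
    and lb: "\<And>t. t \<ge> tz \<Longrightarrow> V t \<ge> Vmin"
    and lip: "\<And>s t. s \<ge> tz \<Longrightarrow> t \<ge> tz \<Longrightarrow> \<bar>h s - h t\<bar> \<le> K * \<bar>s - t\<bar>"
    and K: "K \<ge> 0"
  shows "(h \<longlongrightarrow> 0) at_top"
proof -
  have mono: "V v \<le> V u" if "tz \<le> u" "u \<le> v" for u v
  proof (rule DERIV_nonpos_imp_nonincreasing[OF that(2)])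
    fix x assume "u \<le> x" "x \<le> v"
    then have "x \<ge> tz" using that by simp
    then show "\<exists>y. DERIV V x :> y \<and> y \<le> 0" using der dle hnn by (meson neg_le_0_iff_le order_trans)
  qed
  define m where "m = Inf (V ` {tz..})"
  have bdd: "bdd_below (V ` {tz..})" using lb by (auto intro!: bdd_belowI[of _ Vmin])
  have mle: "m \<le> V t" if "t \<ge> tz" for t unfolding m_def using bdd that by (auto intro: cInf_lower)
  show ?thesis
  proof (rule tendstoI)
    fix e :: real assume e: "e > 0"
    define \<delta> where "\<delta> = e / (2 * (K + 1))"
    have dpos: "\<delta> > 0" using e K unfolding \<delta>_def by simp
    have Kd: "K * \<delta> \<le> e / 2" using e K unfolding \<delta>_def by (simp add: field_simps)
    have "m < m + \<delta> * e / 2" using dpos e by simp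
    moreover have ne: "V ` {tz..} \<noteq> {}" by auto
    ultimately obtain t1 where t1: "t1 \<ge> tz" "V t1 < m + \<delta> * e / 2"
      unfolding m_def using cInf_less_iff[OF ne bdd, of "Inf (V ` {tz..}) + \<delta> * e / 2"] by auto
    have "h t < e" if t: "t \<ge> t1" for t
    proof (rule ccontr)
      assume "\<not> h t < e"
      then have ht: "h t \<ge> e" by simp
      have t0t: "t \<ge> tz" using t t1 by simp
      have "\<exists>\<xi>. t < \<xi> \<and> \<xi> < t + \<delta> \<and> V (t + \<delta>) - V t = (t + \<delta> - t) * V' \<xi>"
        using MVT2[of t "t + \<delta>" V V'] dpos der t0t by simp
      then obtain \<xi> where xi: "t < \<xi>" "\<xi> < t + \<delta>" and eq: "V (t + \<delta>) - V t = \<delta> * V' \<xi>" by auto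
      have "\<bar>h \<xi> - h t\<bar> \<le> K * \<bar>\<xi> - t\<bar>" using lip[of \<xi> t] xi t0t by simp
      also have "\<dots> \<le> K * \<delta>" using xi K by (intro mult_left_mono) auto
      finally have "h \<xi> \<ge> e / 2" using ht Kd by linarith
      then have "V' \<xi> \<le> - (e / 2)" using dle[of \<xi>] xi t0t by simp
      then have "\<delta> * V' \<xi> \<le> \<delta> * (- (e / 2))" using dpos by (intro mult_left_mono) auto
      then have "V (t + \<delta>) \<le> V t - \<delta> * e / 2" using eq by simp
      moreover have "V t \<le> V t1" using mono t t1 by simp
      moreover have "m \<le> V (t + \<delta>)" using mle t0t dpos by simp
      ultimately show False using t1 by simp
    qed
    then show "\<forall>\<^sub>F t in at_top. dist (h t) 0 < e"
      unfolding eventually_at_top_linorder using hnn t1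
      by (intro exI[of _ t1]) (auto simp: dist_real_def)
  qed
qed

lemma deriv_tendsto_zero:
  fixes f g :: "real \<Rightarrow> real"
  assumes der: "\<And>t. t \<ge> tz \<Longrightarrow> (f has_real_derivative g t) (at t)"
    and f0: "(f \<longlongrightarrow> 0) at_top"
    and lip: "\<And>s t. s \<ge> tz \<Longrightarrow> t \<ge> tz \<Longrightarrow> \<bar>g s - g t\<bar> \<le> K * \<bar>s - t\<bar>"
    and K: "K \<ge> 0"
  shows "(g \<longlongrightarrow> 0) at_top"
proof (rule tendstoI)
  fix e :: real assume e: "e > 0"
  define \<delta> where "\<delta> = e / (2 * (K + 1))"
  have dpos: "\<delta> > 0" using e K unfolding \<delta>_def by simp
  have Kd: "K * \<delta> \<le> e / 2" using e K unfolding \<delta>_def by (simp add: field_simps)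
  have "\<forall>\<^sub>F t in at_top. dist (f t) 0 < \<delta> * e / 4"
    using f0 dpos e by (intro tendstoD) auto
  then obtain t1 where t1: "\<And>t. t \<ge> t1 \<Longrightarrow> \<bar>f t\<bar> < \<delta> * e / 4"
    unfolding eventually_at_top_linorder dist_real_def by auto
  have "\<bar>g t\<bar> < e" if t: "t \<ge> max tz t1" for t
  proof -
    have t0t: "t \<ge> tz" using t by simp
    have "\<exists>\<xi>. t < \<xi> \<and> \<xi> < t + \<delta> \<and> f (t + \<delta>) - f t = (t + \<delta> - t) * g \<xi>"
      using MVT2[of t "t + \<delta>" f g] dpos der t0t by simp
    then obtain \<xi> where xi: "t < \<xi>" "\<xi> < t + \<delta>" and eq: "f (t + \<delta>) - f t = \<delta> * g \<xi>" by auto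
    have "\<bar>\<delta> * g \<xi>\<bar> \<le> \<bar>f (t + \<delta>)\<bar> + \<bar>f t\<bar>" using eq by linarith
    also have "\<dots> < \<delta> * e / 2" using t1[of t] t1[of "t + \<delta>"] t dpos by simp
    finally have "\<delta> * \<bar>g \<xi>\<bar> < \<delta> * (e / 2)" using dpos by (simp add: abs_mult)
    then have gxi: "\<bar>g \<xi>\<bar> < e / 2" using dpos by (simp add: mult_less_cancel_left_pos)
    have "\<bar>g \<xi> - g t\<bar> \<le> K * \<bar>\<xi> - t\<bar>" using lip[of \<xi> t] xi t0t by simp
    also have "\<dots> \<le> K * \<delta>" using xi K by (intro mult_left_mono) auto
    finally show ?thesis using gxi Kd by linarith
  qed
  then show "\<forall>\<^sub>F t in at_top. dist (g t) 0 < e"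
    unfolding eventually_at_top_linorder dist_real_def by (intro exI[of _ "max tz t1"]) auto
qed




lemma mv_sum: "(M::real^'a^'b) *v (\<Sum>j\<in>S. f j) = (\<Sum>j\<in>S. M *v f j)"
  by (induction S rule: infinite_finite_induct) (auto simp: matrix_vector_right_distrib)

lemma rhs_nth: "network_rhs L A M v $ i = A *v v$i - M *v (\<Sum>j\<in>UNIV. L i j *\<^sub>R v$j)"
proof -
  have "(\<Sum>j\<in>UNIV. (if i = j then 1 else 0) *\<^sub>R (A *v v$j)) = (\<Sum>j\<in>UNIV. if j = i then A *v v$j else 0)"
    by (rule sum.cong) auto
  also have "\<dots> = A *v v$i" by simp
  finally show ?thesis
    unfolding network_rhs_def kron_apply_def by (simp add: mv_sum matrix_vector_mult_scaleR)
qed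

lemma rhs_linear: "linear (network_rhs L A M)"
  by (rule linearI) (simp_all add: vec_eq_iff rhs_nth algebra_simps sum.distrib scaleR_sum_right mv_sum matrix_vector_mult_scaleR)

lemma sym_inner: "transpose Q = Q \<Longrightarrow> (Q *v u) \<bullet> (v::real^'n) = u \<bullet> (Q *v v)"
  by (metis dot_lmul_matrix transpose_matrix_vector)

lemma inner_transpose: "(u::real^'n) \<bullet> (M *v v) = (transpose M *v u) \<bullet> v"
  by (metis dot_lmul_matrix inner_commute transpose_matrix_vector)

lemma vd_inner:
  assumes "(f has_vector_derivative f') (at t within S)" "(g has_vector_derivative g') (at t within S)"
  shows "((\<lambda>s. f s \<bullet> g s) has_real_derivative (f t \<bullet> g' + f' \<bullet> g t)) (at t within S)"
proof -
  have "((\<lambda>s. f s \<bullet> g s) has_derivative (\<lambda>h. f t \<bullet> (h *\<^sub>R g') + (h *\<^sub>R f') \<bullet> g t)) (at t within S)"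
    using assms unfolding has_vector_derivative_def by (rule has_derivative_inner)
  then show ?thesis unfolding has_field_derivative_def
    by (rule has_derivative_eq_rhs) (auto simp: algebra_simps fun_eq_iff)
qed

locale netsys = tnet w T r for w :: "'k::finite \<Rightarrow> 'k \<Rightarrow> real" and T r +
  fixes Q J R A :: "real^'n^'n" and B :: "real^'m^'n" and C :: "real^'n^'m"
    and x :: "real \<Rightarrow> real^'n^'k"
  assumes Qpd: "pos_def Q" and Jsk: "skew_symmetric J" and Rpsd: "pos_semidef R"
    and Adef: "A = (J - R) ** Q" and Cdef: "C = transpose B ** Q" and obs: "observable C A"
    and xder: "\<forall>t\<ge>0. (x has_vector_derivative network_rhs (laplacian w) A (B ** C) (x t)) (at t within {0..})"
begin

abbreviation Mop where "Mop \<equiv> network_rhs (laplacian w) A (B ** C)"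

lemma Mop_nth: "Mop v $ i = A *v v$i - (B ** C) *v lapv (\<lambda>j. v$j) i"
  unfolding rhs_nth lapv_def ..

lemma Mop_lin: "linear Mop" by (rule rhs_linear)

lemma lapv_const: "lapv (\<lambda>j. c) i = 0"
  unfolding lapv_eq by simp

lemma lapv_mat: "(M::real^'a^'b) *v lapv (u::'k \<Rightarrow> real^'a) i = lapv (\<lambda>j. M *v u j) i"
  unfolding lapv_def by (simp add: mv_sum matrix_vector_mult_scaleR)

definition P where "P = (\<Sum>i\<in>UNIV. pi i)"

lemma P_ge: "P \<ge> 1"
proof -
  have "pi r \<le> P" unfolding P_def by (rule member_le_sum) (auto simp: pi_nonneg)
  then show ?thesis using pi_root by simp
qed

definition Pm :: "real^'n^'k \<Rightarrow> real^'n^'k" where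
  "Pm v = (\<chi> i. \<Sum>j\<in>UNIV. (pi j / P) *\<^sub>R v$j)"

lemma Pm_lin: "linear Pm"
  unfolding Pm_def by (rule linearI) (simp_all add: vec_eq_iff algebra_simps sum.distrib scaleR_sum_right)

lemma Pm_Mop: "Pm (Mop v) = Mop (Pm v)"
proof -
  have s: "(\<Sum>j\<in>UNIV. (pi j / P) *\<^sub>R lapv (\<lambda>l. v$l) j) = 0"
    using pi_lap[of "\<lambda>l. v$l"] by (simp add: scaleR_sum_right[symmetric] divide_inverse mult.commute flip: scaleR_scaleR)
  have "Pm (Mop v) $ i = A *v (\<Sum>j\<in>UNIV. (pi j / P) *\<^sub>R v$j) - (B ** C) *v (\<Sum>j\<in>UNIV. (pi j / P) *\<^sub>R lapv (\<lambda>l. v$l) j)" for i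
    unfolding Pm_def Mop_nth by (simp add: mv_sum matrix_vector_mult_scaleR scaleR_diff_right sum_subtractf)
  moreover have "Mop (Pm v) $ i = A *v (\<Sum>j\<in>UNIV. (pi j / P) *\<^sub>R v$j)" for i
    unfolding Mop_nth by (simp add: Pm_def lapv_eq)
  ultimately show ?thesis using s by (simp add: vec_eq_iff)
qed

lemma Pm_hyper: "(\<Sum>i\<in>UNIV. pi i *\<^sub>R (v - Pm v)$i) = 0"
proof -
  have "(\<Sum>i\<in>UNIV. pi i *\<^sub>R (Pm v)$i) = P *\<^sub>R (\<Sum>j\<in>UNIV. (pi j / P) *\<^sub>R v$j)"
    unfolding Pm_def by (simp add: P_def scaleR_sum_left)
  also have "\<dots> = (\<Sum>j\<in>UNIV. pi j *\<^sub>R v$j)" using P_ge by (simp add: scaleR_sum_right)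
  finally show ?thesis by (simp add: scaleR_diff_right sum_subtractf)
qed

lemma Pm_same: "Pm v $ i = Pm v $ j" unfolding Pm_def by simp

end



context netsys begin

definition z :: "real \<Rightarrow> real^'n^'k" where "z t = x t - Pm (x t)"

lemma Mop_bl: "bounded_linear Mop" using Mop_lin linear_linear by blast
lemma Pm_bl: "bounded_linear Pm" using Pm_lin linear_linear by blast

lemma zder0: "t \<ge> 0 \<Longrightarrow> (z has_vector_derivative Mop (z t)) (at t within {0..})"
proof -
  assume t: "t \<ge> 0"
  have d1: "(x has_vector_derivative Mop (x t)) (at t within {0..})" using xder t by blast
  have d2: "((\<lambda>s. Pm (x s)) has_vector_derivative Pm (Mop (x t))) (at t within {0..})"
    using bounded_linear.has_vector_derivative[OF Pm_bl d1] .
  have "((\<lambda>s. x s - Pm (x s)) has_vector_derivative Mop (x t) - Pm (Mop (x t))) (at t within {0..})"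
    using d1 d2 by (rule has_vector_derivative_diff)
  moreover have "Mop (x t) - Pm (Mop (x t)) = Mop (z t)"
    unfolding z_def Pm_Mop linear_diff[OF Mop_lin] ..
  ultimately show ?thesis unfolding z_def by simp
qed

lemma zder: "t > 0 \<Longrightarrow> (z has_vector_derivative Mop (z t)) (at t)"
proof -
  assume t: "t > 0"
  have "at t within {0..} = at t" by (rule at_within_open_subset[of _ "{0<..}"]) (use t in auto)
  then show ?thesis using zder0[of t] t by simp
qed

lemma z_hyper: "(\<Sum>i\<in>UNIV. pi i *\<^sub>R z t $ i) = 0"
  unfolding z_def by (rule Pm_hyper)

definition Yop :: "nat \<Rightarrow> real^'n^'k \<Rightarrow> real^'m^'k" where
  "Yop k v = (\<chi> i. C *v ((Mop ^^ k) v $ i))"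

lemma Mpow_lin: "linear (Mop ^^ k)"
proof (induction k)
  case 0 then show ?case by (simp add: linear_id[unfolded id_def])
next
  case (Suc k) then show ?case using linear_compose[OF Suc Mop_lin] by (simp add: o_def)
qed

lemma Yop_lin: "linear (Yop k)"
proof -
  have l: "linear (Mop ^^ k)" by (rule Mpow_lin)
  show ?thesis unfolding Yop_def
    by (rule linearI) (simp_all add: vec_eq_iff linear_add[OF l] linear_scale[OF l] matrix_vector_right_distrib matrix_vector_mult_scaleR)
qed

lemma Yop_bl: "bounded_linear (Yop k)" using Yop_lin linear_linear by blast

lemma Yop_Suc: "Yop k (Mop v) = Yop (Suc k) v"
  unfolding Yop_def by (simp add: funpow_Suc_right del: funpow.simps)

lemma Yop0: "Yop 0 v $ i = C *v v$i" unfolding Yop_def by simp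

lemma norm_sq_vec: "(norm (y::('a::real_inner)^'k))\<^sup>2 = (\<Sum>i\<in>UNIV. (norm (y$i))\<^sup>2)"
  by (simp add: power2_norm_eq_inner inner_vec_def)

end



context netsys begin

definition dsel :: "'k \<Rightarrow> real" where
  "dsel = (SOME d. (\<forall>v. d v > 0) \<and> (\<exists>c>0. \<forall>y::(real^'m)^'k. (\<Sum>i\<in>UNIV. pi i *\<^sub>R y$i) = 0 \<longrightarrow>
      c * (\<Sum>i\<in>UNIV. (norm (y$i))\<^sup>2) \<le> (\<Sum>i\<in>UNIV. gw d i * (y$i \<bullet> lapv (\<lambda>j. y$j) i))))"

lemma dsel: "(\<forall>v. dsel v > 0) \<and> (\<exists>c>0. \<forall>y::(real^'m)^'k. (\<Sum>i\<in>UNIV. pi i *\<^sub>R y$i) = 0 \<longrightarrow>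
      c * (\<Sum>i\<in>UNIV. (norm (y$i))\<^sup>2) \<le> (\<Sum>i\<in>UNIV. gw dsel i * (y$i \<bullet> lapv (\<lambda>j. y$j) i)))"
  unfolding dsel_def by (rule someI_ex[OF phi_bound])

definition c0 :: real where
  "c0 = (SOME c. c > 0 \<and> (\<forall>y::(real^'m)^'k. (\<Sum>i\<in>UNIV. pi i *\<^sub>R y$i) = 0 \<longrightarrow>
      c * (\<Sum>i\<in>UNIV. (norm (y$i))\<^sup>2) \<le> (\<Sum>i\<in>UNIV. gw dsel i * (y$i \<bullet> lapv (\<lambda>j. y$j) i))))"

lemma c0: "c0 > 0 \<and> (\<forall>y::(real^'m)^'k. (\<Sum>i\<in>UNIV. pi i *\<^sub>R y$i) = 0 \<longrightarrow>
      c0 * (\<Sum>i\<in>UNIV. (norm (y$i))\<^sup>2) \<le> (\<Sum>i\<in>UNIV. gw dsel i * (y$i \<bullet> lapv (\<lambda>j. y$j) i)))"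
  unfolding c0_def by (rule someI_ex[OF conjunct2[OF dsel]])

definition gd :: "'k \<Rightarrow> real" where "gd = gw dsel"

lemma gd_pos: "gd i > 0" unfolding gd_def using gw_pos dsel by blast

lemma c0'1: "c0 > 0" using c0 by (rule conjunct1)

lemma c0'2: "(\<Sum>i\<in>UNIV. pi i *\<^sub>R y$i) = 0 \<Longrightarrow>
      c0 * (\<Sum>i\<in>UNIV. (norm (y$i))\<^sup>2) \<le> (\<Sum>i\<in>UNIV. gd i * (y$i \<bullet> lapv (\<lambda>j. (y::(real^'m)^'k)$j) i))"
  unfolding gd_def by (rule conjunct2[OF c0, rule_format])

lemma Qsym: "transpose Q = Q" using Qpd unfolding pos_def_def symmetric_mat_def by blast

lemma quad_A: "u \<bullet> (Q *v (A *v u)) \<le> 0"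
proof -
  define p where "p = Q *v u"
  have "u \<bullet> (Q *v (A *v u)) = p \<bullet> ((J - R) *v p)"
    unfolding p_def Adef using sym_inner[OF Qsym, of u] by (simp add: matrix_vector_mul_assoc[symmetric])
  also have "\<dots> = p \<bullet> (J *v p) - p \<bullet> (R *v p)"
    by (simp add: matrix_vector_mult_diff_rdistrib inner_diff_right)
  also have "p \<bullet> (J *v p) = 0"
  proof -
    have "p \<bullet> (J *v p) = (transpose J *v p) \<bullet> p" by (rule inner_transpose)
    also have "transpose J *v p = - (J *v p)" using Jsk unfolding skew_symmetric_def
      by (simp add: vec_eq_iff matrix_vector_mult_def sum_negf)
    also have "(- (J *v p)) \<bullet> p = - (p \<bullet> (J *v p))" by (simp add: inner_commute)
    finally show ?thesis by simp
  qed
  also have "p \<bullet> (R *v p) \<ge> 0" using Rpsd unfolding pos_semidef_def by blast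
  finally show ?thesis by simp
qed

lemma quad_BC: "u \<bullet> (Q *v ((B ** C) *v v)) = (C *v u) \<bullet> (C *v v)"
proof -
  have "u \<bullet> (Q *v ((B ** C) *v v)) = (Q *v u) \<bullet> (B *v (C *v v))"
    using sym_inner[OF Qsym, of u] by (simp add: matrix_vector_mul_assoc[symmetric])
  also have "\<dots> = (transpose B *v (Q *v u)) \<bullet> (C *v v)" by (rule inner_transpose)
  also have "transpose B *v (Q *v u) = C *v u" unfolding Cdef by (simp add: matrix_vector_mul_assoc)
  finally show ?thesis .
qed

definition V :: "real \<Rightarrow> real" where
  "V t = (\<Sum>i\<in>UNIV. gd i * (z t $ i \<bullet> (Q *v z t $ i)))"

definition V' :: "real \<Rightarrow> real" where
  "V' t = (\<Sum>i\<in>UNIV. gd i * (2 * (z t $ i \<bullet> (Q *v Mop (z t) $ i))))"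

lemma Vder: "t > 0 \<Longrightarrow> (V has_real_derivative V' t) (at t)"
proof -
  assume t: "t > 0"
  have Qbl: "bounded_linear ((*v) Q)" using matrix_vector_mul_linear linear_linear by blast
  have di: "((\<lambda>s. z s $ i \<bullet> (Q *v z s $ i)) has_real_derivative 2 * (z t $ i \<bullet> (Q *v Mop (z t) $ i))) (at t)" for i
  proof -
    have d1: "((\<lambda>s. z s $ i) has_vector_derivative Mop (z t) $ i) (at t)"
      using bounded_linear.has_vector_derivative[OF bounded_linear_vec_nth zder[OF t]] .
    have d2: "((\<lambda>s. Q *v z s $ i) has_vector_derivative Q *v Mop (z t) $ i) (at t)"
      using bounded_linear.has_vector_derivative[OF Qbl d1] .
    have "(Mop (z t) $ i) \<bullet> (Q *v z t $ i) = z t $ i \<bullet> (Q *v Mop (z t) $ i)"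
      using sym_inner[OF Qsym] by (metis inner_commute)
    then show ?thesis using vd_inner[OF d1 d2] by simp
  qed
  show ?thesis unfolding V_def V'_def
    by (intro DERIV_sum DERIV_cmult di)
qed

lemma Vprime_le: "V' t \<le> - 2 * c0 * (norm (Yop 0 (z t)))\<^sup>2"
proof -
  define y where "y = Yop 0 (z t)"
  have yi: "y $ i = C *v z t $ i" for i unfolding y_def Yop0 ..
  have hyp: "(\<Sum>i\<in>UNIV. pi i *\<^sub>R y$i) = 0"
  proof -
    have "(\<Sum>i\<in>UNIV. pi i *\<^sub>R y$i) = C *v (\<Sum>i\<in>UNIV. pi i *\<^sub>R z t $ i)"
      by (simp add: yi mv_sum matrix_vector_mult_scaleR)
    then show ?thesis using z_hyper by simp
  qed
  have trm: "z t $ i \<bullet> (Q *v Mop (z t) $ i) = z t $ i \<bullet> (Q *v (A *v z t $ i)) - y$i \<bullet> lapv (\<lambda>j. y$j) i" for i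
  proof -
    have "z t $ i \<bullet> (Q *v ((B ** C) *v lapv (\<lambda>j. z t $ j) i)) = (C *v z t $ i) \<bullet> (C *v lapv (\<lambda>j. z t $ j) i)"
      by (rule quad_BC)
    also have "\<dots> = y$i \<bullet> lapv (\<lambda>j. y$j) i" unfolding lapv_mat yi ..
    finally show ?thesis unfolding Mop_nth by (simp add: matrix_vector_mult_diff_distrib inner_diff_right)
  qed
  have "V' t = (\<Sum>i\<in>UNIV. gd i * (2 * (z t $ i \<bullet> (Q *v (A *v z t $ i)) - y$i \<bullet> lapv (\<lambda>j. y$j) i)))"
    unfolding V'_def trm by simp
  also have "\<dots> \<le> (\<Sum>i\<in>UNIV. - 2 * (gd i * (y$i \<bullet> lapv (\<lambda>j. y$j) i)))"
  proof (rule sum_mono)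
    fix i
    have "z t $ i \<bullet> (Q *v (A *v z t $ i)) \<le> 0" by (rule quad_A)
    then show "gd i * (2 * (z t $ i \<bullet> (Q *v (A *v z t $ i)) - y$i \<bullet> lapv (\<lambda>j. y$j) i))
        \<le> - 2 * (gd i * (y$i \<bullet> lapv (\<lambda>j. y$j) i))"
      using gd_pos[of i] by (simp add: algebra_simps mult_nonneg_nonpos)
  qed
  also have "\<dots> = - 2 * (\<Sum>i\<in>UNIV. gd i * (y$i \<bullet> lapv (\<lambda>j. y$j) i))" by (simp add: sum_distrib_left)
  also have "\<dots> \<le> - 2 * (c0 * (\<Sum>i\<in>UNIV. (norm (y$i))\<^sup>2))" using c0'2[OF hyp] by simp
  finally show ?thesis unfolding y_def[symmetric] norm_sq_vec by simp
qed

end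



lemma norm_sq_lip: "\<bar>(norm a)\<^sup>2 - (norm b)\<^sup>2\<bar> \<le> norm (a - b) * (norm a + norm b)"
proof -
  have e: "(norm a)\<^sup>2 - (norm b)\<^sup>2 = (norm a - norm b) * (norm a + norm b)"
    by (simp add: power2_eq_square algebra_simps)
  have "\<bar>(norm a)\<^sup>2 - (norm b)\<^sup>2\<bar> = \<bar>norm a - norm b\<bar> * (norm a + norm b)"
    unfolding e abs_mult by simp
  also have "\<dots> \<le> norm (a - b) * (norm a + norm b)"
    by (intro mult_right_mono norm_triangle_ineq3) auto
  finally show ?thesis .
qed

context netsys begin

lemma Q_lower: "\<exists>lam>0. \<forall>v. lam * (norm v)\<^sup>2 \<le> v \<bullet> (Q *v v)"
proof (rule quad_lower)
  show "continuous_on UNIV (\<lambda>v. v \<bullet> (Q *v v))"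
    by (intro continuous_intros matrix_vector_mult_linear_continuous_on)
  show "(s *\<^sub>R v) \<bullet> (Q *v (s *\<^sub>R v)) = s\<^sup>2 * (v \<bullet> (Q *v v))" for s v
    by (simp add: matrix_vector_mult_scaleR power2_eq_square)
  show "v \<noteq> 0 \<Longrightarrow> v \<bullet> (Q *v v) > 0" for v using Qpd unfolding pos_def_def by blast
qed

definition lam where "lam = (SOME l. l > 0 \<and> (\<forall>v. l * (norm v)\<^sup>2 \<le> v \<bullet> (Q *v v)))"
lemma lam: "lam > 0" "lam * (norm v)\<^sup>2 \<le> v \<bullet> (Q *v v)"
  using someI_ex[OF Q_lower] unfolding lam_def[symmetric] by auto

definition mg where "mg = Min (range gd)"
lemma mg: "mg > 0" "mg \<le> gd i"
  unfolding mg_def using gd_pos by (subst Min_gr_iff; auto) (rule Min_le, auto)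

lemma V_lower: "lam * mg * (norm (z t))\<^sup>2 \<le> V t"
proof -
  have "lam * mg * (norm (z t))\<^sup>2 = (\<Sum>i\<in>UNIV. mg * (lam * (norm (z t $ i))\<^sup>2))"
    unfolding norm_sq_vec by (simp add: sum_distrib_left algebra_simps)
  also have "\<dots> \<le> V t" unfolding V_def
  proof (rule sum_mono)
    fix i
    show "mg * (lam * (norm (z t $ i))\<^sup>2) \<le> gd i * (z t $ i \<bullet> (Q *v z t $ i))"
      using mg(1) mg(2)[of i] lam(1) lam(2)[of "z t $ i"] by (intro mult_mono) auto
  qed
  finally show ?thesis .
qed

lemma Vprime_nonpos: "V' t \<le> 0"
proof -
  have "0 \<le> 2 * c0 * (norm (Yop 0 (z t)))\<^sup>2" using c0'1 by simp
  then show ?thesis using Vprime_le[of t] by linarith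
qed

lemma V_mono: "1 \<le> u \<Longrightarrow> u \<le> v \<Longrightarrow> V v \<le> V u"
proof -
  assume uv: "1 \<le> u" "u \<le> v"
  have "\<exists>y. DERIV V t :> y \<and> y \<le> 0" if "u \<le> t" "t \<le> v" for t
    using Vder[of t] Vprime_nonpos[of t] that uv by auto
  then show ?thesis using DERIV_nonpos_imp_nonincreasing[of u v V] uv by blast
qed

definition Zb where "Zb = sqrt (V 1 / (lam * mg))"

lemma z_bound: "t \<ge> 1 \<Longrightarrow> norm (z t) \<le> Zb"
proof -
  assume t: "t \<ge> 1"
  have "lam * mg * (norm (z t))\<^sup>2 \<le> V 1" using V_lower[of t] V_mono[of 1 t] t by simp
  then have "(norm (z t))\<^sup>2 \<le> V 1 / (lam * mg)" using lam(1) mg(1) by (simp add: field_simps)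
  then show ?thesis unfolding Zb_def by (simp add: real_le_rsqrt)
qed

lemma Zb_nonneg: "Zb \<ge> 0" using z_bound[of 1] norm_ge_zero by (meson order_trans order_refl)


end



context netsys begin

definition KM where "KM = (SOME K. K > 0 \<and> (\<forall>v. norm (Mop v) \<le> norm v * K))"
lemma KM: "KM > 0" "norm (Mop v) \<le> norm v * KM"
  using someI_ex[OF bounded_linear.pos_bounded[OF Mop_bl]] unfolding KM_def[symmetric] by auto

definition KY where "KY k = (SOME K. K > 0 \<and> (\<forall>v. norm (Yop k v) \<le> norm v * K))"
lemma KY: "KY k > 0" "norm (Yop k v) \<le> norm v * KY k"
  using someI_ex[OF bounded_linear.pos_bounded[OF Yop_bl[of k]]] unfolding KY_def[symmetric] by auto

definition Lz where "Lz = KM * Zb"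

lemma Lz_nonneg: "Lz \<ge> 0" unfolding Lz_def using KM(1) Zb_nonneg by simp

lemma z_lip: "s \<ge> 1 \<Longrightarrow> t \<ge> 1 \<Longrightarrow> norm (z s - z t) \<le> Lz * \<bar>s - t\<bar>"
proof -
  assume st: "s \<ge> 1" "t \<ge> 1"
  have d: "(z has_vector_derivative Mop (z t)) (at t)" if "t \<ge> 1" for t using zder that by simp
  have b: "norm (Mop (z t)) \<le> Lz" if "t \<ge> 1" for t
  proof -
    have "norm (Mop (z t)) \<le> norm (z t) * KM" by (rule KM(2))
    also have "\<dots> \<le> Zb * KM" using z_bound[OF that] KM(1) by (intro mult_right_mono) auto
    finally show ?thesis unfolding Lz_def by (simp add: mult.commute)
  qed
  show ?thesis using lipschitz_from_deriv[of 1 z "\<lambda>t. Mop (z t)" Lz s t, OF d b] st by simp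
qed

lemma Y_lip: "s \<ge> 1 \<Longrightarrow> t \<ge> 1 \<Longrightarrow> norm (Yop k (z s) - Yop k (z t)) \<le> (KY k * Lz) * \<bar>s - t\<bar>"
proof -
  assume st: "s \<ge> 1" "t \<ge> 1"
  have "norm (Yop k (z s) - Yop k (z t)) = norm (Yop k (z s - z t))" by (simp add: linear_diff[OF Yop_lin])
  also have "\<dots> \<le> norm (z s - z t) * KY k" by (rule KY(2))
  also have "\<dots> \<le> (Lz * \<bar>s - t\<bar>) * KY k" using z_lip[OF st] less_imp_le[OF KY(1)] by (intro mult_right_mono) auto
  finally show ?thesis by (simp add: algebra_simps)
qed

lemma Y_bound: "t \<ge> 1 \<Longrightarrow> norm (Yop k (z t)) \<le> Zb * KY k"
  using KY(2)[of k "z t"] z_bound[of t] KY(1)[of k] by (smt (verit) mult_right_mono)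

lemma Y0_tendsto: "((\<lambda>t. Yop 0 (z t)) \<longlongrightarrow> 0) at_top"
proof -
  define h where "h t = 2 * c0 * (norm (Yop 0 (z t)))\<^sup>2" for t
  define K where "K = 2 * c0 * ((KY 0 * Lz) * (2 * (Zb * KY 0)))"
  have K: "K \<ge> 0" unfolding K_def using c0'1 KY(1)[of 0] Lz_nonneg Zb_nonneg by simp
  have "(h \<longlongrightarrow> 0) at_top"
  proof (rule barbalat_ineq[where tz=1 and V=V and V'=V' and Vmin=0 and K=K])
    show "(V has_real_derivative V' t) (at t)" if "t \<ge> 1" for t using Vder that by simp
    show "V' t \<le> - h t" for t using Vprime_le[of t] unfolding h_def by simp
    show "h t \<ge> 0" for t unfolding h_def using c0'1 by simp
    show "V t \<ge> 0" for t using V_lower[of t] lam(1) mg(1) by (smt (verit) mult_nonneg_nonneg zero_le_power2)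
    show "K \<ge> 0" by (rule K)
    show "\<bar>h s - h t\<bar> \<le> K * \<bar>s - t\<bar>" if st: "s \<ge> 1" "t \<ge> 1" for s t
    proof -
      have "\<bar>h s - h t\<bar> = 2 * c0 * \<bar>(norm (Yop 0 (z s)))\<^sup>2 - (norm (Yop 0 (z t)))\<^sup>2\<bar>"
        unfolding h_def using c0'1 by (simp add: abs_mult flip: right_diff_distrib)
      also have "\<dots> \<le> 2 * c0 * (norm (Yop 0 (z s) - Yop 0 (z t)) * (norm (Yop 0 (z s)) + norm (Yop 0 (z t))))"
        using c0'1 by (intro mult_left_mono norm_sq_lip) auto
      also have "\<dots> \<le> 2 * c0 * (((KY 0 * Lz) * \<bar>s - t\<bar>) * (2 * (Zb * KY 0)))"
        using c0'1 Y_lip[OF st, of 0] Y_bound[OF st(1), of 0] Y_bound[OF st(2), of 0] KY(1)[of 0] Lz_nonneg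
        by (intro mult_left_mono mult_mono) auto
      finally show ?thesis unfolding K_def by (simp add: algebra_simps)
    qed
  qed
  then have "((\<lambda>t. (1 / (2 * c0)) * h t) \<longlongrightarrow> (1 / (2 * c0)) * 0) at_top" by (rule tendsto_mult_left)
  then have "((\<lambda>t. (norm (Yop 0 (z t)))\<^sup>2) \<longlongrightarrow> 0) at_top" unfolding h_def using c0'1 by simp
  then have "((\<lambda>t. sqrt ((norm (Yop 0 (z t)))\<^sup>2)) \<longlongrightarrow> sqrt 0) at_top" by (rule tendsto_real_sqrt)
  then have "((\<lambda>t. norm (Yop 0 (z t))) \<longlongrightarrow> 0) at_top" by simp
  then show ?thesis by (simp add: tendsto_norm_zero_iff)
qed

end



context netsys begin

lemma Y_tendsto: "((\<lambda>t. Yop k (z t)) \<longlongrightarrow> 0) at_top"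
proof (induction k)
  case 0 then show ?case by (rule Y0_tendsto)
next
  case (Suc k)
  show ?case
  proof (rule vec_tendstoI, rule vec_tendstoI)
    fix i a
    have g0: "((\<lambda>t. Yop (Suc k) (z t) $ i $ a) \<longlongrightarrow> 0) at_top"
    proof (rule deriv_tendsto_zero[where tz=1 and f="\<lambda>t. Yop k (z t) $ i $ a" and K="KY (Suc k) * Lz"])
      show "((\<lambda>t. Yop k (z t) $ i $ a) has_real_derivative Yop (Suc k) (z t) $ i $ a) (at t)" if "t \<ge> 1" for t
      proof -
        have "((\<lambda>s. Yop k (z s)) has_vector_derivative Yop k (Mop (z t))) (at t)"
          using bounded_linear.has_vector_derivative[OF Yop_bl zder] that by simp
        then have "((\<lambda>s. Yop k (z s)) has_vector_derivative Yop (Suc k) (z t)) (at t)" by (simp add: Yop_Suc)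
        then have "((\<lambda>s. Yop k (z s) $ i) has_vector_derivative Yop (Suc k) (z t) $ i) (at t)"
          by (rule bounded_linear.has_vector_derivative[OF bounded_linear_vec_nth])
        then have "((\<lambda>s. Yop k (z s) $ i $ a) has_vector_derivative Yop (Suc k) (z t) $ i $ a) (at t)"
          by (rule bounded_linear.has_vector_derivative[OF bounded_linear_vec_nth])
        then show ?thesis by (simp add: has_real_derivative_iff_has_vector_derivative)
      qed
      have "((\<lambda>t. Yop k (z t) $ i $ a) \<longlongrightarrow> (0::real^'m^'k) $ i $ a) at_top"
        by (intro tendsto_vec_nth Suc.IH)
      then show "((\<lambda>t. Yop k (z t) $ i $ a) \<longlongrightarrow> 0) at_top" by simp
      show "KY (Suc k) * Lz \<ge> 0" using KY(1)[of "Suc k"] Lz_nonneg by simp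
      show "\<bar>Yop (Suc k) (z s) $ i $ a - Yop (Suc k) (z t) $ i $ a\<bar> \<le> KY (Suc k) * Lz * \<bar>s - t\<bar>"
        if "s \<ge> 1" "t \<ge> 1" for s t
      proof -
        have "\<bar>Yop (Suc k) (z s) $ i $ a - Yop (Suc k) (z t) $ i $ a\<bar> = \<bar>(Yop (Suc k) (z s) - Yop (Suc k) (z t)) $ i $ a\<bar>"
          by simp
        also have "\<dots> \<le> norm ((Yop (Suc k) (z s) - Yop (Suc k) (z t)) $ i)" by (rule component_le_norm_cart)
        also have "\<dots> \<le> norm (Yop (Suc k) (z s) - Yop (Suc k) (z t))" by (rule Finite_Cartesian_Product.norm_nth_le)
        also have "\<dots> \<le> KY (Suc k) * Lz * \<bar>s - t\<bar>" using Y_lip that by simp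
        finally show ?thesis .
      qed
    qed
    then show "((\<lambda>t. Yop (Suc k) (z t) $ i $ a) \<longlongrightarrow> (0::real^'m^'k) $ i $ a) at_top" by simp
  qed
qed

lemma obs_zero:
  assumes "\<forall>k < CARD('n). Yop k v = 0" shows "v = 0"
proof -
  have pw: "k \<le> CARD('n) \<Longrightarrow> (Mop ^^ k) v = (\<chi> i. mpow A k *v v$i)" for k
  proof (induction k)
    case 0 then show ?case by (simp add: vec_eq_iff matrix_vector_mul_lid)
  next
    case (Suc k)
    define u where "u = (Mop ^^ k) v"
    have u: "u = (\<chi> i. mpow A k *v v$i)" using Suc unfolding u_def by simp
    have Cu: "C *v u$j = 0" for j
    proof -
      have "C *v u$j = Yop k v $ j" unfolding Yop_def u_def by simp
      then show ?thesis using assms Suc.prems by simp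
    qed
    have "(B ** C) *v lapv (\<lambda>j. u$j) i = 0" for i
    proof -
      have "(B ** C) *v lapv (\<lambda>j. u$j) i = B *v (C *v lapv (\<lambda>j. u$j) i)"
        by (simp add: matrix_vector_mul_assoc)
      also have "C *v lapv (\<lambda>j. u$j) i = lapv (\<lambda>j. C *v u$j) i" by (rule lapv_mat)
      also have "\<dots> = 0" unfolding Cu lapv_eq by simp
      finally show ?thesis by simp
    qed
    then have "Mop u = (\<chi> i. A *v u$i)" by (simp add: vec_eq_iff Mop_nth)
    then show ?case unfolding u_def[symmetric] funpow.simps o_def
      by (simp add: u matrix_vector_mul_assoc vec_eq_iff)
  qed
  have "v$i = 0" for i
  proof -
    have "(C ** mpow A k) *v v$i = 0" if "k < CARD('n)" for k
    proof -
      have "(C ** mpow A k) *v v$i = C *v ((Mop ^^ k) v $ i)"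
        using pw[of k] that by (simp add: matrix_vector_mul_assoc)
      also have "\<dots> = Yop k v $ i" unfolding Yop_def by simp
      finally show ?thesis using assms that by simp
    qed
    then show ?thesis using obs unfolding observable_def by blast
  qed
  then show ?thesis by (simp add: vec_eq_iff)
qed

definition qobs :: "real^'n^'k \<Rightarrow> real" where
  "qobs v = (\<Sum>k<CARD('n). (norm (Yop k v))\<^sup>2)"

lemma qobs_lower: "\<exists>\<mu>>0. \<forall>v. \<mu> * (norm v)\<^sup>2 \<le> qobs v"
proof (rule quad_lower)
  show "continuous_on UNIV qobs" unfolding qobs_def
    by (intro continuous_intros linear_continuous_on Yop_bl)
  show "qobs (s *\<^sub>R v) = s\<^sup>2 * qobs v" for s v
    unfolding qobs_def by (simp add: linear_scale[OF Yop_lin] power_mult_distrib sum_distrib_left)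
  show "qobs v > 0" if "v \<noteq> 0" for v
  proof -
    obtain k where k: "k < CARD('n)" "Yop k v \<noteq> 0" using obs_zero \<open>v \<noteq> 0\<close> by blast
    have p: "(norm (Yop k v))\<^sup>2 > 0" using k by simp
    have le: "(norm (Yop k v))\<^sup>2 \<le> qobs v" unfolding qobs_def
      by (rule member_le_sum) (use k in auto)
    show ?thesis using p le by linarith
  qed
qed

lemma z_tendsto: "(z \<longlongrightarrow> 0) at_top"
proof -
  obtain \<mu> where mu: "\<mu> > 0" "\<And>v. \<mu> * (norm v)\<^sup>2 \<le> qobs v" using qobs_lower by blast
  have "((\<lambda>t. qobs (z t)) \<longlongrightarrow> 0) at_top"
  proof -
    have "((\<lambda>t. \<Sum>k<CARD('n). (norm (Yop k (z t)))\<^sup>2) \<longlongrightarrow> (\<Sum>k<CARD('n). (norm (0::real^'m^'k))\<^sup>2)) at_top"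
      by (intro tendsto_sum tendsto_power tendsto_norm Y_tendsto)
    then show ?thesis unfolding qobs_def by simp
  qed
  then have "((\<lambda>t. qobs (z t) / \<mu>) \<longlongrightarrow> 0 / \<mu>) at_top" by (intro tendsto_divide tendsto_const) (use mu in auto)
  then have up: "((\<lambda>t. qobs (z t) / \<mu>) \<longlongrightarrow> 0) at_top" by simp
  have "((\<lambda>t. (norm (z t))\<^sup>2) \<longlongrightarrow> 0) at_top"
  proof (rule real_tendsto_sandwich[OF _ _ tendsto_const up])
    show "\<forall>\<^sub>F t in at_top. 0 \<le> (norm (z t))\<^sup>2" by simp
    show "\<forall>\<^sub>F t in at_top. (norm (z t))\<^sup>2 \<le> qobs (z t) / \<mu>"
      using mu by (simp add: field_simps mult.commute)
  qed
  then have "((\<lambda>t. sqrt ((norm (z t))\<^sup>2)) \<longlongrightarrow> sqrt 0) at_top" by (rule tendsto_real_sqrt)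
  then have "((\<lambda>t. norm (z t)) \<longlongrightarrow> 0) at_top" by simp
  then show ?thesis by (simp add: tendsto_norm_zero_iff)
qed

lemma conclusion: "\<forall>i j. ((\<lambda>t. x t $ i - x t $ j) \<longlongrightarrow> 0) at_top"
proof (intro allI)
  fix i j
  have e: "x t $ i - x t $ j = z t $ i - z t $ j" for t
    unfolding z_def using Pm_same[of "x t" i j] by simp
  have "((\<lambda>t. z t $ i - z t $ j) \<longlongrightarrow> (0::real^'n^'k) $ i - (0::real^'n^'k) $ j) at_top"
    by (intro tendsto_diff tendsto_vec_nth z_tendsto)
  then show "((\<lambda>t. x t $ i - x t $ j) \<longlongrightarrow> 0) at_top" unfolding e by simp
qed

end


theorem theorem1:
  fixes Q J R A :: "real^'n^'n"
    and B :: "real^'m^'n"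
    and C :: "real^'n^'m"
    and w :: "'k::finite \<Rightarrow> 'k \<Rightarrow> real"
    and x :: "real \<Rightarrow> real^'n^'k"
  assumes "pos_def Q" and "skew_symmetric J" and "pos_semidef R"
    and "A = (J - R) ** Q" and "C = transpose B ** Q"
    and "controllable A B" and "observable C A"
    and "CARD('k) \<ge> 2"
    and "\<forall>i j. i \<noteq> j \<longrightarrow> w i j \<ge> 0"
    and "is_tree (uedge w)"
    and "has_rooted_spanning_tree w"
    and "\<forall>t\<ge>0. (x has_vector_derivative network_rhs (laplacian w) A (B ** C) (x t)) (at t within {0..})"
  shows "\<forall>i j. ((\<lambda>t. x t $ i - x t $ j) \<longlongrightarrow> 0) at_top"
proof -
  obtain T r where T1: "\<forall>i j. T i j \<longrightarrow> arc w i j" and T2: "is_tree T"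
    and T3: "\<forall>i. \<not> T i r" and T4: "\<forall>v. v \<noteq> r \<longrightarrow> (\<exists>!i. T i v)"
    using assms(11) unfolding has_rooted_spanning_tree_def by blast
  interpret netsys w T r Q J R A B C x
    by (unfold_locales) (use assms T1 T2 T3 T4 in auto)
  show ?thesis by (rule conclusion)
qed

end
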